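(* Let $A\in\mathbb{Z}^{d\times n}$, $\mathbf{b}\in\mathbb{Z}^d$, $\mathbf{c}\in\mathbb{Z}^n$, $\mathbf{u}\in\mathbb{Z}_{\ge0}^n$. Let $\mathbf{x}_k$ be feasible, let $\alpha\mathbf{s}$ be a steepest-descent augmentation relative to $\mathbf{x}_k$, and let $\mathbf{x}_{k+1}:=\mathbf{x}_k+\alpha\mathbf{s}$. Let $\beta\mathbf{t}$ be a steepest-descent augmentation relative to $\mathbf{x}_{k+1}$. Then $-\mathbf{c}^\top\mathbf{s}/\|\mathbf{s}\|_1\ \ge\ -\mathbf{c}^\top\mathbf{t}/\|\mathbf{t}\|_1$.
   Context: Feasible means $A\mathbf{x}=\mathbf{b}$, $\mathbf{0}\le\mathbf{x}\le\mathbf{u}$, $\mathbf{x}\in\mathbb{Z}^n$. A steepest-descent augmentation relative to a feasible $\mathbf{x}$ is $\alpha\mathbf{s}$ where $\mathbf{s}\in\mathbb{Z}^n\setminus\{\mathbf{0}\}$, $A\mathbf{s}=\mathbf{0}$, $\mathbf{c}^\top\mathbf{s}<0$, $\alpha$ is a positive integer with $\mathbf{x}+\alpha\mathbf{s}$ feasible, and $-\mathbf{c}^\top\mathbf{s}/\|\mathbf{s}\|_1\ge-\mathbf{c}^\top\mathbf{z}/\|\mathbf{z}\|_1$ for every $\mathbf{z}\in\mathbb{Z}^n\setminus\{\mathbf{0}\}$ with $A\mathbf{z}=\mathbf{0}$ and $\mathbf{x}+\mathbf{z}$ feasible. *)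

theory Defs
  imports "HOL-Analysis.Analysis"
begin

definition feasible :: "int ^ 'n ^ 'd \<Rightarrow> int ^ 'd \<Rightarrow> int ^ 'n \<Rightarrow> int ^ 'n \<Rightarrow> bool" where
  "feasible A b u x \<longleftrightarrow> A *v x = b \<and> (\<forall>i. 0 \<le> x $ i \<and> x $ i \<le> u $ i)"

definition l1norm :: "int ^ 'n \<Rightarrow> int" where
  "l1norm s = (\<Sum>i\<in>UNIV. \<bar>s $ i\<bar>)"

definition cdot :: "int ^ 'n \<Rightarrow> int ^ 'n \<Rightarrow> int" where
  "cdot c s = (\<Sum>i\<in>UNIV. c $ i * s $ i)"

definition descent_ratio :: "int ^ 'n \<Rightarrow> int ^ 'n \<Rightarrow> real" where
  "descent_ratio c s = - real_of_int (cdot c s) / real_of_int (l1norm s)"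

definition steepest_descent_aug ::
  "int ^ 'n ^ 'd \<Rightarrow> int ^ 'd \<Rightarrow> int ^ 'n \<Rightarrow> int ^ 'n \<Rightarrow> int ^ 'n \<Rightarrow> int \<Rightarrow> int ^ 'n \<Rightarrow> bool" where
  "steepest_descent_aug A b c u x \<alpha> s \<longleftrightarrow>
     s \<noteq> 0 \<and> A *v s = 0 \<and> cdot c s < 0 \<and> \<alpha> > 0 \<and>
     feasible A b u (x + of_int \<alpha> * s) \<and>
     (\<forall>z. z \<noteq> 0 \<and> A *v z = 0 \<and> feasible A b u (x + z) \<longrightarrow>
          descent_ratio c s \<ge> descent_ratio c z)"

end

theory Submission
  imports Defs
begin

lemma ofint_idx: "(of_int a :: int ^ 'n) $ i = a"
proof (cases a rule: int_cases)
  case (nonneg n) then show ?thesis using of_nat_index[where 'a=int and 'n='n and n=n and i=i] by simp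
next
  case (neg n)
  then have "(of_int a :: int ^ 'n) = - of_nat (Suc n)" by simp
  then show ?thesis using of_nat_index[where 'a=int and 'n='n and n="Suc n" and i=i] neg by simp
qed

lemma ofint_comp: "((of_int a :: int ^ 'n) * s) $ i = a * s $ i"
  by (simp add: ofint_idx)

lemma mv_lin: "(A :: int ^ 'n ^ 'd) *v (of_int a * s + of_int b * t) = of_int a * (A *v s) + of_int b * (A *v t)"
  by (simp add: vec_eq_iff matrix_vector_mult_def ofint_comp ofint_idx sum.distrib sum_distrib_left algebra_simps)

lemma cdot_lin: "cdot c (of_int a * s + of_int b * t) = a * cdot c s + b * cdot c t"
  by (simp add: cdot_def ofint_comp ofint_idx sum.distrib sum_distrib_left algebra_simps)

lemma l1_lin: assumes "a \<ge> 0" "b \<ge> 0"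
  shows "l1norm (of_int a * s + of_int b * t) \<le> a * l1norm s + b * l1norm t"
proof -
  have "\<And>i. \<bar>a * s $ i + b * t $ i\<bar> \<le> a * \<bar>s $ i\<bar> + b * \<bar>t $ i\<bar>"
    using assms by (metis abs_mult abs_of_nonneg abs_triangle_ineq)
  then show ?thesis unfolding l1norm_def
    by (simp add: ofint_idx sum_distrib_left sum.distrib[symmetric] sum_mono)
qed

lemma l1_pos: "s \<noteq> 0 \<Longrightarrow> l1norm s > 0"
proof -
  assume "s \<noteq> 0"
  then obtain i where "s $ i \<noteq> 0" by (auto simp: vec_eq_iff)
  then have "0 < \<bar>s $ i\<bar>" by simp
  also have "\<dots> \<le> l1norm s" unfolding l1norm_def
    by (rule member_le_sum) auto
  finally show ?thesis .
qed

theorem lemma4: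
  fixes A :: "int ^ 'n ^ 'd" and b :: "int ^ 'd" and c u xk s t :: "int ^ 'n"
    and \<alpha> \<beta> :: int
  assumes "\<forall>i. 0 \<le> u $ i"
    and "feasible A b u xk"
    and "steepest_descent_aug A b c u xk \<alpha> s"
    and "steepest_descent_aug A b c u (xk + of_int \<alpha> * s) \<beta> t"
  shows "descent_ratio c s \<ge> descent_ratio c t"
proof (rule ccontr)
  assume H: "\<not> ?thesis"
  note S = assms(3)[unfolded steepest_descent_aug_def]
  note T = assms(4)[unfolded steepest_descent_aug_def]
  define z where "z = of_int \<alpha> * s + of_int \<beta> * t"
  have cz: "cdot c z = \<alpha> * cdot c s + \<beta> * cdot c t" unfolding z_def by (rule cdot_lin)
  have Az: "A *v z = 0" unfolding z_def mv_lin using S T by simp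
  have fz: "feasible A b u (xk + z)" using T unfolding z_def by (simp add: add.assoc)
  have "cdot c z < 0" unfolding cz using S T
    by (smt (verit) mult_pos_neg)
  hence z0: "z \<noteq> 0" by (auto simp: cdot_def)
  have rz: "descent_ratio c s \<ge> descent_ratio c z" using S Az fz z0 by blast
  define a where "a = real_of_int (- cdot c s)"
  define bb where "bb = real_of_int (- cdot c t)"
  define p where "p = real_of_int (l1norm s)"
  define q where "q = real_of_int (l1norm t)"
  define r where "r = real_of_int (l1norm z)"
  have ap: "a > 0" "bb > 0" using S T by (auto simp: a_def bb_def)
  have pp: "p > 0" "q > 0" "r > 0" using S T z0 l1_pos by (auto simp: p_def q_def r_def)
  have al: "real_of_int \<alpha> > 0" "real_of_int \<beta> > 0" using S T by auto
  have rle: "r \<le> \<alpha> * p + \<beta> * q"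
  proof -
    have "l1norm (of_int \<alpha> * s + of_int \<beta> * t) \<le> \<alpha> * l1norm s + \<beta> * l1norm t"
      using l1_lin[of \<alpha> \<beta> s t] S T by simp
    then have "real_of_int (l1norm (of_int \<alpha> * s + of_int \<beta> * t)) \<le> real_of_int (\<alpha> * l1norm s + \<beta> * l1norm t)"
      by linarith
    then show ?thesis by (simp add: r_def p_def q_def z_def)
  qed
  have H1: "bb / q > a / p" using H by (simp add: descent_ratio_def a_def bb_def p_def q_def)
  have ez: "descent_ratio c z = (\<alpha> * a + \<beta> * bb) / r"
    unfolding descent_ratio_def cz r_def a_def bb_def by simp
  have es: "descent_ratio c s = a / p" unfolding descent_ratio_def a_def p_def by simp
  have H2: "a / p \<ge> (\<alpha> * a + \<beta> * bb) / r" using rz ez es by simp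
  have "bb * p > a * q" using H1 pp by (simp add: divide_less_eq less_divide_eq mult.commute)
  hence m: "\<beta> * (bb * p) > \<beta> * (a * q)" using al by (simp add: mult_strict_left_mono)
  have "(\<alpha> * a + \<beta> * bb) * p > a * (\<alpha> * p + \<beta> * q)"
    using m by (simp add: algebra_simps)
  moreover have "a * (\<alpha> * p + \<beta> * q) \<ge> a * r" using rle ap by simp
  moreover have "a * r \<ge> (\<alpha> * a + \<beta> * bb) * p" using H2 pp by (simp add: divide_le_eq le_divide_eq)
  ultimately show False by linarith
qed

end
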